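(* Let $\mathcal C$ be a $\dagger$-symmetric monoidal category, let $(A,\delta_A,\gamma_A)$ be a $\dagger$-Frobenius structure in $\mathcal C$, and let $U:A\to A$ be unitary. Then $(A,\ (U\otimes U)\circ\delta_A\circ U^\dagger,\ \gamma_A\circ U^\dagger)$ is also a $\dagger$-Frobenius structure. Moreover, the two $\dagger$-compact structures induced by these two $\dagger$-Frobenius structures (namely $\epsilon=\gamma_A\circ\delta_A^\dagger$ and $\epsilon'=\gamma_A\circ U^\dagger\circ\big((U\otimes U)\circ\delta_A\circ U^\dagger\big)^\dagger$, both of type $A\otimes A\to I$) coincide if and only if $U_*=U$, where $U_*$ is computed with respect to the self-dual compact structure $\epsilon$ on $A$ (with $A^*=A$).
   Context: A $\dagger$-symmetric monoidal category ($\dagger$-SMC) is a symmetric monoidal category (associativity and unit isomorphisms taken strict, symmetry $\sigma_{A,B}:A\otimes B\to B\otimes A$) with an involutive, identity-on-objects contravariant functor $\dagger$ satisfying $(g\circ f)^\dagger=f^\dagger\circ g^\dagger$, $f^{\dagger\dagger}=f$, $(f\otimes g)^\dagger=f^\dagger\otimes g^\dagger$, and $\sigma^\dagger=\sigma^{-1}$. A morphism $f$ is unitary if it is invertible with $f^{-1}=f^\dagger$. A $\dagger$-Frobenius structure is a co-commutative comonoid $(A,\delta_A:A\to A\otimes A,\gamma_A:A\to I)$ (coassociative, counital) such that $\delta_A^\dagger\circ\delta_A=1_A$ and $\delta_A\circ\delta_A^\dagger=(\delta_A^\dagger\otimes 1_A)\circ(1_A\otimes\delta_A)$. A $\dagger$-compact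 structure is a pair $(A,\epsilon_A:A\otimes A^*\to I)$ (for some object $A^*$) with $(\epsilon_A\otimes 1_A)\circ(1_A\otimes\sigma_{A,A^*})\circ(1_A\otimes\epsilon_A^\dagger)=1_A$; for a $\dagger$-Frobenius structure, $(A,\gamma_A\circ\delta_A^\dagger)$ is a $\dagger$-compact structure with $A^*=A$. Given such a self-dual compact structure $\epsilon:A\otimes A\to I$, for $f:A\to A$ define $f^*:=(1_A\otimes\epsilon)\circ(1_A\otimes f\otimes 1_A)\circ(\epsilon^\dagger\otimes 1_A):A\to A$ and $f_*:=(f^\dagger)^*$. *)

theory Defs
  imports Main
begin

text \<open>A strict dagger-symmetric monoidal category, presented explicitly by its data:
objects of type 'o, morphisms of type 'm, with domain/codomain, identities, composition
(Comp g f means g after f), tensor on objects and morphisms, unit object, symmetry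
and dagger.  Associativity and unit isomorphisms are strict (identities).\<close>

record ('o, 'm) dsmc =
  Obj  :: "'o set"
  Arr  :: "'m set"
  Dom  :: "'m \<Rightarrow> 'o"
  Cod  :: "'m \<Rightarrow> 'o"
  Id   :: "'o \<Rightarrow> 'm"
  Comp :: "'m \<Rightarrow> 'm \<Rightarrow> 'm"
  TenO :: "'o \<Rightarrow> 'o \<Rightarrow> 'o"
  TenM :: "'m \<Rightarrow> 'm \<Rightarrow> 'm"
  Unit :: "'o"
  Sym  :: "'o \<Rightarrow> 'o \<Rightarrow> 'm"
  Dag  :: "'m \<Rightarrow> 'm"

definition hom :: "('o, 'm) dsmc \<Rightarrow> 'o \<Rightarrow> 'o \<Rightarrow> 'm set" where
  "hom C a b = {f \<in> Arr C. Dom C f = a \<and> Cod C f = b}"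

definition category :: "('o, 'm) dsmc \<Rightarrow> bool" where
  "category C \<longleftrightarrow>
     (\<forall>f \<in> Arr C. Dom C f \<in> Obj C \<and> Cod C f \<in> Obj C) \<and>
     (\<forall>a \<in> Obj C. Id C a \<in> hom C a a) \<and>
     (\<forall>f \<in> Arr C. \<forall>g \<in> Arr C. Cod C f = Dom C g \<longrightarrow>
        Comp C g f \<in> hom C (Dom C f) (Cod C g)) \<and>
     (\<forall>f \<in> Arr C. \<forall>g \<in> Arr C. \<forall>h \<in> Arr C. Cod C f = Dom C g \<longrightarrow> Cod C g = Dom C h \<longrightarrow>
        Comp C h (Comp C g f) = Comp C (Comp C h g) f) \<and>
     (\<forall>f \<in> Arr C. Comp C (Id C (Cod C f)) f = f \<and> Comp C f (Id C (Dom C f)) = f)"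

definition strict_monoidal :: "('o, 'm) dsmc \<Rightarrow> bool" where
  "strict_monoidal C \<longleftrightarrow>
     Unit C \<in> Obj C \<and>
     (\<forall>a \<in> Obj C. \<forall>b \<in> Obj C. TenO C a b \<in> Obj C) \<and>
     (\<forall>f \<in> Arr C. \<forall>g \<in> Arr C.
        TenM C f g \<in> hom C (TenO C (Dom C f) (Dom C g)) (TenO C (Cod C f) (Cod C g))) \<and>
     (\<forall>a \<in> Obj C. \<forall>b \<in> Obj C. TenM C (Id C a) (Id C b) = Id C (TenO C a b)) \<and>
     (\<forall>f \<in> Arr C. \<forall>g \<in> Arr C. \<forall>f' \<in> Arr C. \<forall>g' \<in> Arr C.
        Cod C f = Dom C g \<longrightarrow> Cod C f' = Dom C g' \<longrightarrow>
        Comp C (TenM C g g') (TenM C f f') = TenM C (Comp C g f) (Comp C g' f')) \<and>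
     (\<forall>a \<in> Obj C. \<forall>b \<in> Obj C. \<forall>c \<in> Obj C.
        TenO C (TenO C a b) c = TenO C a (TenO C b c)) \<and>
     (\<forall>f \<in> Arr C. \<forall>g \<in> Arr C. \<forall>h \<in> Arr C.
        TenM C (TenM C f g) h = TenM C f (TenM C g h)) \<and>
     (\<forall>a \<in> Obj C. TenO C (Unit C) a = a \<and> TenO C a (Unit C) = a) \<and>
     (\<forall>f \<in> Arr C. TenM C (Id C (Unit C)) f = f \<and> TenM C f (Id C (Unit C)) = f)"

definition symmetric :: "('o, 'm) dsmc \<Rightarrow> bool" where
  "symmetric C \<longleftrightarrow>
     (\<forall>a \<in> Obj C. \<forall>b \<in> Obj C. Sym C a b \<in> hom C (TenO C a b) (TenO C b a)) \<and>
     (\<forall>f \<in> Arr C. \<forall>g \<in> Arr C.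
        Comp C (Sym C (Cod C f) (Cod C g)) (TenM C f g)
        = Comp C (TenM C g f) (Sym C (Dom C f) (Dom C g))) \<and>
     (\<forall>a \<in> Obj C. \<forall>b \<in> Obj C. Comp C (Sym C b a) (Sym C a b) = Id C (TenO C a b)) \<and>
     (\<forall>a \<in> Obj C. \<forall>b \<in> Obj C. \<forall>c \<in> Obj C.
        Sym C a (TenO C b c)
        = Comp C (TenM C (Id C b) (Sym C a c)) (TenM C (Sym C a b) (Id C c))) \<and>
     (\<forall>a \<in> Obj C. Sym C a (Unit C) = Id C a)"

definition dagger :: "('o, 'm) dsmc \<Rightarrow> bool" where
  "dagger C \<longleftrightarrow>
     (\<forall>f \<in> Arr C. Dag C f \<in> hom C (Cod C f) (Dom C f)) \<and>
     (\<forall>a \<in> Obj C. Dag C (Id C a) = Id C a) \<and>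
     (\<forall>f \<in> Arr C. \<forall>g \<in> Arr C. Cod C f = Dom C g \<longrightarrow>
        Dag C (Comp C g f) = Comp C (Dag C f) (Dag C g)) \<and>
     (\<forall>f \<in> Arr C. Dag C (Dag C f) = f) \<and>
     (\<forall>f \<in> Arr C. \<forall>g \<in> Arr C. Dag C (TenM C f g) = TenM C (Dag C f) (Dag C g)) \<and>
     (\<forall>a \<in> Obj C. \<forall>b \<in> Obj C. Dag C (Sym C a b) = Sym C b a)"
     \<comment> \<open>sigma_{a,b}^{-1} = sigma_{b,a} in a symmetric monoidal category\<close>

definition dagger_smc :: "('o, 'm) dsmc \<Rightarrow> bool" where
  "dagger_smc C \<longleftrightarrow> category C \<and> strict_monoidal C \<and> symmetric C \<and> dagger C"

definition unitary :: "('o, 'm) dsmc \<Rightarrow> 'o \<Rightarrow> 'o \<Rightarrow> 'm \<Rightarrow> bool" where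
  "unitary C a b f \<longleftrightarrow> f \<in> hom C a b \<and>
     Comp C (Dag C f) f = Id C a \<and> Comp C f (Dag C f) = Id C b"

definition dagger_frobenius :: "('o, 'm) dsmc \<Rightarrow> 'o \<Rightarrow> 'm \<Rightarrow> 'm \<Rightarrow> bool" where
  "dagger_frobenius C A d g \<longleftrightarrow>
     A \<in> Obj C \<and> d \<in> hom C A (TenO C A A) \<and> g \<in> hom C A (Unit C) \<and>
     Comp C (TenM C d (Id C A)) d = Comp C (TenM C (Id C A) d) d \<and>
     Comp C (TenM C g (Id C A)) d = Id C A \<and>
     Comp C (TenM C (Id C A) g) d = Id C A \<and>
     Comp C (Sym C A A) d = d \<and>
     Comp C (Dag C d) d = Id C A \<and>
     Comp C d (Dag C d) = Comp C (TenM C (Dag C d) (Id C A)) (TenM C (Id C A) d)"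

text \<open>For a self-dual compact structure e : A \<otimes> A \<rightarrow> I, the transpose
f^* = (1 \<otimes> e) \<circ> (1 \<otimes> f \<otimes> 1) \<circ> (e^\<dagger> \<otimes> 1), and f_* = (f^\<dagger>)^*.\<close>

definition upper_star :: "('o, 'm) dsmc \<Rightarrow> 'o \<Rightarrow> 'm \<Rightarrow> 'm \<Rightarrow> 'm" where
  "upper_star C A e f =
     Comp C (TenM C (Id C A) e)
       (Comp C (TenM C (Id C A) (TenM C f (Id C A))) (TenM C (Dag C e) (Id C A)))"

definition lower_star :: "('o, 'm) dsmc \<Rightarrow> 'o \<Rightarrow> 'm \<Rightarrow> 'm \<Rightarrow> 'm" where
  "lower_star C A e f = upper_star C A e (Dag C f)"

end

theory Submission
  imports Defs
begin


locale DS = fixes C :: "('o,'m) dsmc" assumes ds: "dagger_smc C"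
begin

lemma cat: "category C" and smc: "strict_monoidal C" and sy: "symmetric C" and dg: "dagger C"
  using ds by (simp_all add: dagger_smc_def)

lemma arr_comp[simp]: "f \<in> Arr C \<Longrightarrow> g \<in> Arr C \<Longrightarrow> Cod C f = Dom C g \<Longrightarrow> Comp C g f \<in> Arr C"
  and dom_comp[simp]: "f \<in> Arr C \<Longrightarrow> g \<in> Arr C \<Longrightarrow> Cod C f = Dom C g \<Longrightarrow> Dom C (Comp C g f) = Dom C f"
  and cod_comp[simp]: "f \<in> Arr C \<Longrightarrow> g \<in> Arr C \<Longrightarrow> Cod C f = Dom C g \<Longrightarrow> Cod C (Comp C g f) = Cod C g"
  using cat unfolding category_def hom_def by blast+

lemma arr_id[simp]: "a \<in> Obj C \<Longrightarrow> Id C a \<in> Arr C"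
  and dom_id[simp]: "a \<in> Obj C \<Longrightarrow> Dom C (Id C a) = a"
  and cod_id[simp]: "a \<in> Obj C \<Longrightarrow> Cod C (Id C a) = a"
  using cat unfolding category_def hom_def by blast+

lemma obj_dom[simp]: "f \<in> Arr C \<Longrightarrow> Dom C f \<in> Obj C"
  and obj_cod[simp]: "f \<in> Arr C \<Longrightarrow> Cod C f \<in> Obj C"
  using cat unfolding category_def by blast+

lemma assoc: "f \<in> Arr C \<Longrightarrow> g \<in> Arr C \<Longrightarrow> h \<in> Arr C \<Longrightarrow> Cod C f = Dom C g \<Longrightarrow> Cod C g = Dom C h \<Longrightarrow>
   Comp C h (Comp C g f) = Comp C (Comp C h g) f"
  using cat unfolding category_def by blast

lemma idl[simp]: "f \<in> Arr C \<Longrightarrow> Cod C f = a \<Longrightarrow> Comp C (Id C a) f = f"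
  and idr[simp]: "f \<in> Arr C \<Longrightarrow> Dom C f = a \<Longrightarrow> Comp C f (Id C a) = f"
  using cat unfolding category_def by blast+

lemma unit_obj[simp]: "Unit C \<in> Obj C"
  and obj_ten[simp]: "a \<in> Obj C \<Longrightarrow> b \<in> Obj C \<Longrightarrow> TenO C a b \<in> Obj C"
  using smc unfolding strict_monoidal_def by blast+

lemma arr_ten[simp]: "f \<in> Arr C \<Longrightarrow> g \<in> Arr C \<Longrightarrow> TenM C f g \<in> Arr C"
  and dom_ten[simp]: "f \<in> Arr C \<Longrightarrow> g \<in> Arr C \<Longrightarrow> Dom C (TenM C f g) = TenO C (Dom C f) (Dom C g)"
  and cod_ten[simp]: "f \<in> Arr C \<Longrightarrow> g \<in> Arr C \<Longrightarrow> Cod C (TenM C f g) = TenO C (Cod C f) (Cod C g)"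
  using smc unfolding strict_monoidal_def hom_def by blast+

lemma id_ten[simp]: "a \<in> Obj C \<Longrightarrow> b \<in> Obj C \<Longrightarrow> Id C (TenO C a b) = TenM C (Id C a) (Id C b)"
  using smc unfolding strict_monoidal_def by metis

lemma idl2[simp]: "f \<in> Arr C \<Longrightarrow> a \<in> Obj C \<Longrightarrow> b \<in> Obj C \<Longrightarrow> Cod C f = TenO C a b \<Longrightarrow> Comp C (TenM C (Id C a) (Id C b)) f = f"
  and idr2[simp]: "f \<in> Arr C \<Longrightarrow> a \<in> Obj C \<Longrightarrow> b \<in> Obj C \<Longrightarrow> Dom C f = TenO C a b \<Longrightarrow> Comp C f (TenM C (Id C a) (Id C b)) = f"
  using idl idr id_ten by metis+

lemma interchange: "f \<in> Arr C \<Longrightarrow> g \<in> Arr C \<Longrightarrow> f' \<in> Arr C \<Longrightarrow> g' \<in> Arr C \<Longrightarrow>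
   Cod C f = Dom C g \<Longrightarrow> Cod C f' = Dom C g' \<Longrightarrow>
   Comp C (TenM C g g') (TenM C f f') = TenM C (Comp C g f) (Comp C g' f')"
  using smc unfolding strict_monoidal_def by blast

lemma tenO_assoc[simp]: "a \<in> Obj C \<Longrightarrow> b \<in> Obj C \<Longrightarrow> c \<in> Obj C \<Longrightarrow>
   TenO C (TenO C a b) c = TenO C a (TenO C b c)"
  and ten_assoc[simp]: "f \<in> Arr C \<Longrightarrow> g \<in> Arr C \<Longrightarrow> h \<in> Arr C \<Longrightarrow>
   TenM C (TenM C f g) h = TenM C f (TenM C g h)"
  and tenO_unitl[simp]: "a \<in> Obj C \<Longrightarrow> TenO C (Unit C) a = a"
  and tenO_unitr[simp]: "a \<in> Obj C \<Longrightarrow> TenO C a (Unit C) = a"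
  and ten_unitl[simp]: "f \<in> Arr C \<Longrightarrow> TenM C (Id C (Unit C)) f = f"
  and ten_unitr[simp]: "f \<in> Arr C \<Longrightarrow> TenM C f (Id C (Unit C)) = f"
  using smc unfolding strict_monoidal_def by blast+

lemma arr_sym[simp]: "a \<in> Obj C \<Longrightarrow> b \<in> Obj C \<Longrightarrow> Sym C a b \<in> Arr C"
  and dom_sym[simp]: "a \<in> Obj C \<Longrightarrow> b \<in> Obj C \<Longrightarrow> Dom C (Sym C a b) = TenO C a b"
  and cod_sym[simp]: "a \<in> Obj C \<Longrightarrow> b \<in> Obj C \<Longrightarrow> Cod C (Sym C a b) = TenO C b a"
  using sy unfolding symmetric_def hom_def by blast+

lemma sym_nat: "f \<in> Arr C \<Longrightarrow> g \<in> Arr C \<Longrightarrow>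
        Comp C (Sym C (Cod C f) (Cod C g)) (TenM C f g)
        = Comp C (TenM C g f) (Sym C (Dom C f) (Dom C g))"
  and sym_inv: "a \<in> Obj C \<Longrightarrow> b \<in> Obj C \<Longrightarrow> Comp C (Sym C b a) (Sym C a b) = Id C (TenO C a b)"
  using sy unfolding symmetric_def by blast+

lemma arr_dag[simp]: "f \<in> Arr C \<Longrightarrow> Dag C f \<in> Arr C"
  and dom_dag[simp]: "f \<in> Arr C \<Longrightarrow> Dom C (Dag C f) = Cod C f"
  and cod_dag[simp]: "f \<in> Arr C \<Longrightarrow> Cod C (Dag C f) = Dom C f"
  and dag_id[simp]: "a \<in> Obj C \<Longrightarrow> Dag C (Id C a) = Id C a"
  and dag_comp[simp]: "f \<in> Arr C \<Longrightarrow> g \<in> Arr C \<Longrightarrow> Cod C f = Dom C g \<Longrightarrow>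
        Dag C (Comp C g f) = Comp C (Dag C f) (Dag C g)"
  and dag_dag[simp]: "f \<in> Arr C \<Longrightarrow> Dag C (Dag C f) = f"
  and dag_ten[simp]: "f \<in> Arr C \<Longrightarrow> g \<in> Arr C \<Longrightarrow> Dag C (TenM C f g) = TenM C (Dag C f) (Dag C g)"
  and dag_sym[simp]: "a \<in> Obj C \<Longrightarrow> b \<in> Obj C \<Longrightarrow> Dag C (Sym C a b) = Sym C b a"
  using dg unfolding dagger_def hom_def by blast+

end


locale FR = DS + fixes A d g
  assumes fr: "dagger_frobenius C A d g"
begin

lemma A[simp]: "A \<in> Obj C" and d[simp]: "d \<in> Arr C" "Dom C d = A" "Cod C d = TenO C A A"
  and g[simp]: "g \<in> Arr C" "Dom C g = A" "Cod C g = Unit C"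
  using fr unfolding dagger_frobenius_def hom_def by auto

lemma coassoc: "Comp C (TenM C d (Id C A)) d = Comp C (TenM C (Id C A) d) d"
  and cul: "Comp C (TenM C g (Id C A)) d = Id C A"
  and cur: "Comp C (TenM C (Id C A) g) d = Id C A"
  and cocom: "Comp C (Sym C A A) d = d"
  and iso: "Comp C (Dag C d) d = Id C A"
  and frobl: "Comp C d (Dag C d) = Comp C (TenM C (Dag C d) (Id C A)) (TenM C (Id C A) d)"
  using fr unfolding dagger_frobenius_def by auto

definition "e = Comp C g (Dag C d)"
lemma e[simp]: "e \<in> Arr C" "Dom C e = TenO C A A" "Cod C e = Unit C"
  by (simp_all add: e_def)

lemma eS: "Comp C e (Sym C A A) = e"
proof -
  have "Comp C e (Sym C A A) = Comp C g (Dag C (Comp C (Sym C A A) d))"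
    by (simp add: e_def assoc)
  then show ?thesis by (simp add: cocom e_def)
qed

lemma X: "Comp C (TenM C e (Id C A)) (TenM C (Id C A) (Dag C e)) = Id C A"
proof -
  have 1: "TenM C e (Id C A) = Comp C (TenM C g (Id C A)) (TenM C (Dag C d) (Id C A))"
    by (simp add: e_def interchange)
  have 2: "TenM C (Id C A) (Dag C e) = Comp C (TenM C (Id C A) d) (TenM C (Id C A) (Dag C g))"
    by (simp add: e_def interchange)
  have "Comp C (TenM C e (Id C A)) (TenM C (Id C A) (Dag C e)) =
     Comp C (Comp C (TenM C g (Id C A)) (Comp C d (Dag C d))) (TenM C (Id C A) (Dag C g))"
    unfolding 1 2 frobl by (simp add: assoc)
  also have "\<dots> = Comp C (Comp C (Comp C (TenM C g (Id C A)) d) (Dag C d)) (TenM C (Id C A) (Dag C g))"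
    by (simp add: assoc)
  also have "\<dots> = Dag C (Comp C (TenM C (Id C A) g) d)"
    by (simp add: cul assoc)
  also have "\<dots> = Id C A" by (simp add: cur)
  finally show ?thesis .
qed


lemma Inj: assumes V: "V \<in> Arr C" "Dom C V = A" "Cod C V = A"
  shows "V = Comp C (TenM C (Comp C e (TenM C V (Id C A))) (Id C A)) (TenM C (Id C A) (Dag C e))"
proof -
  have i1: "Comp C (TenM C (Id C A) (Dag C e)) V = TenM C V (Dag C e)"
    using interchange[of V "Id C A" "Id C (Unit C)" "Dag C e"] V by simp
  have i2: "TenM C V (Dag C e) = Comp C (TenM C V (TenM C (Id C A) (Id C A))) (TenM C (Id C A) (Dag C e))"
    using interchange[of "Id C A" V "Dag C e" "Id C (TenO C A A)"] V by simp
  have i3: "Comp C (TenM C e (Id C A)) (TenM C V (TenM C (Id C A) (Id C A))) = TenM C (Comp C e (TenM C V (Id C A))) (Id C A)"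
    using interchange[of "TenM C V (Id C A)" e "Id C A" "Id C A"] V by simp
  have "V = Comp C (Comp C (TenM C e (Id C A)) (TenM C (Id C A) (Dag C e))) V"
    using V by (simp add: X)
  also have "\<dots> = Comp C (TenM C e (Id C A)) (Comp C (TenM C (Id C A) (Dag C e)) V)"
    using V by (simp add: assoc)
  also have "\<dots> = Comp C (TenM C e (Id C A)) (Comp C (TenM C V (TenM C (Id C A) (Id C A))) (TenM C (Id C A) (Dag C e)))"
    using i1 i2 by simp
  also have "\<dots> = Comp C (Comp C (TenM C e (Id C A)) (TenM C V (TenM C (Id C A) (Id C A)))) (TenM C (Id C A) (Dag C e))"
    using V by (simp add: assoc)
  also have "\<dots> = Comp C (TenM C (Comp C e (TenM C V (Id C A))) (Id C A)) (TenM C (Id C A) (Dag C e))"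
    using i3 by simp
  finally show ?thesis .
qed

lemma T: assumes h: "h \<in> Arr C" "Dom C h = TenO C A A" "Cod C h = Unit C"
  shows "Comp C e (TenM C (Id C A) (Comp C (TenM C (Id C A) h) (TenM C (Dag C e) (Id C A)))) = h"
proof -
  have i1: "TenM C (Id C A) (Comp C (TenM C (Id C A) h) (TenM C (Dag C e) (Id C A)))
     = Comp C (TenM C (Id C A) (TenM C (Id C A) h)) (TenM C (Id C A) (TenM C (Dag C e) (Id C A)))"
    using interchange[of "Id C A" "Id C A" "TenM C (Dag C e) (Id C A)" "TenM C (Id C A) h"] h by simp
  have a1: "Comp C e (TenM C (Id C A) (TenM C (Id C A) h)) = TenM C e h"
    using interchange[of "TenM C (Id C A) (Id C A)" e h "Id C (Unit C)"] h by simp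
  have a2: "Comp C h (TenM C e (TenM C (Id C A) (Id C A))) = TenM C e h"
    using interchange[of e "Id C (Unit C)" "TenM C (Id C A) (Id C A)" h] h by simp
  have b: "Comp C (TenM C e (TenM C (Id C A) (Id C A))) (TenM C (Id C A) (TenM C (Dag C e) (Id C A)))
     = TenM C (Comp C (TenM C e (Id C A)) (TenM C (Id C A) (Dag C e))) (Id C A)"
    using interchange[of "TenM C (Id C A) (Dag C e)" "TenM C e (Id C A)" "Id C A" "Id C A"] h by simp
  have "Comp C e (TenM C (Id C A) (Comp C (TenM C (Id C A) h) (TenM C (Dag C e) (Id C A))))
    = Comp C (Comp C e (TenM C (Id C A) (TenM C (Id C A) h))) (TenM C (Id C A) (TenM C (Dag C e) (Id C A)))"
    unfolding i1 using h by (simp add: assoc)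
  also have "\<dots> = Comp C h (Comp C (TenM C e (TenM C (Id C A) (Id C A))) (TenM C (Id C A) (TenM C (Dag C e) (Id C A))))"
    unfolding a1 a2[symmetric] using h by (simp add: assoc)
  also have "\<dots> = h" unfolding b X using h by simp
  finally show ?thesis .
qed

lemma Sw: assumes V: "V \<in> Arr C" "Dom C V = A" "Cod C V = A"
  shows "Comp C e (TenM C V (Id C A)) = Comp C (Comp C e (TenM C (Id C A) V)) (Sym C A A)"
proof -
  have n: "Comp C (Sym C A A) (TenM C V (Id C A)) = Comp C (TenM C (Id C A) V) (Sym C A A)"
    using sym_nat[of V "Id C A"] V by simp
  have "Comp C (Comp C e (TenM C (Id C A) V)) (Sym C A A) = Comp C e (Comp C (Sym C A A) (TenM C V (Id C A)))"
    unfolding n using V by (simp add: assoc)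
  also have "\<dots> = Comp C e (TenM C V (Id C A))" using V by (simp add: assoc eS)
  finally show ?thesis by simp
qed

end


locale FRU = FR + fixes U
  assumes un: "unitary C A A U"
begin

lemma U[simp]: "U \<in> Arr C" "Dom C U = A" "Cod C U = A"
  and UU[simp]: "Comp C (Dag C U) U = Id C A" "Comp C U (Dag C U) = Id C A"
  using un unfolding unitary_def hom_def by auto

lemma uu[simp]: "x \<in> Arr C \<Longrightarrow> Dom C x = A \<Longrightarrow> Comp C (Comp C x (Dag C U)) U = x"
  "x \<in> Arr C \<Longrightarrow> Dom C x = A \<Longrightarrow> Comp C (Comp C x U) (Dag C U) = x"
  by (simp_all flip: assoc)

definition "us = lower_star C A e U"

lemma us_eq: "us = Comp C (TenM C (Id C A) (Comp C e (TenM C (Dag C U) (Id C A)))) (TenM C (Dag C e) (Id C A))"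
proof -
  have "TenM C (Id C A) (Comp C e (TenM C (Dag C U) (Id C A))) = Comp C (TenM C (Id C A) e) (TenM C (Id C A) (TenM C (Dag C U) (Id C A)))"
    by (simp add: interchange)
  then show ?thesis unfolding us_def lower_star_def upper_star_def by (simp add: assoc)
qed

lemma us[simp]: "us \<in> Arr C" "Dom C us = A" "Cod C us = A"
  unfolding us_eq by simp_all

lemma usT: "Comp C e (TenM C (Id C A) us) = Comp C e (TenM C (Dag C U) (Id C A))"
  unfolding us_eq by (rule T) simp_all

lemma eprime: "Comp C (Comp C g (Dag C U)) (Dag C (Comp C (TenM C U U) (Comp C d (Dag C U))))
   = Comp C e (TenM C (Dag C U) (Dag C U))"
  by (simp add: assoc e_def)

lemma part2: "(e = Comp C e (TenM C (Dag C U) (Dag C U))) \<longleftrightarrow> us = U"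
proof
  assume H: "e = Comp C e (TenM C (Dag C U) (Dag C U))"
  have "Comp C e (TenM C (Id C A) U) = Comp C (Comp C e (TenM C (Dag C U) (Dag C U))) (TenM C (Id C A) U)"
    using H by simp
  also have "\<dots> = Comp C e (TenM C (Dag C U) (Id C A))"
    by (simp flip: assoc add: interchange)
  finally have 1: "Comp C e (TenM C (Id C A) us) = Comp C e (TenM C (Id C A) U)"
    using usT by simp
  have "Comp C e (TenM C us (Id C A)) = Comp C e (TenM C U (Id C A))"
    using Sw[of us] Sw[of U] 1 by simp
  then show "us = U" using Inj[of us] Inj[of U] by simp
next
  assume H: "us = U"
  have 1: "Comp C e (TenM C (Id C A) U) = Comp C e (TenM C (Dag C U) (Id C A))"
    using usT H by simp
  have "Comp C e (TenM C (Dag C U) (Dag C U)) = Comp C (Comp C e (TenM C (Dag C U) (Id C A))) (TenM C (Id C A) (Dag C U))"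
    by (simp flip: assoc add: interchange)
  also have "\<dots> = Comp C (Comp C e (TenM C (Id C A) U)) (TenM C (Id C A) (Dag C U))"
    using 1 by simp
  also have "\<dots> = e" by (simp flip: assoc add: interchange)
  finally show "e = Comp C e (TenM C (Dag C U) (Dag C U))" by simp
qed

end


context FRU begin

definition "d' = Comp C (TenM C U U) (Comp C d (Dag C U))"
definition "g' = Comp C g (Dag C U)"

lemma d'[simp]: "d' \<in> Arr C" "Dom C d' = A" "Cod C d' = TenO C A A"
  and g'[simp]: "g' \<in> Arr C" "Dom C g' = A" "Cod C g' = Unit C"
  by (simp_all add: d'_def g'_def)

lemma d'U: "Comp C d' U = Comp C (TenM C U U) d"
  by (simp add: d'_def assoc)

lemma coassoc': "Comp C (TenM C d' (Id C A)) d' = Comp C (TenM C (Id C A) d') d'"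
proof -
  have i1: "Comp C (TenM C d' (Id C A)) (TenM C U U) = TenM C (Comp C (TenM C U U) d) U"
    using interchange[of U d' U "Id C A"] d'U by simp
  have i2: "TenM C (Comp C (TenM C U U) d) U = Comp C (TenM C U (TenM C U U)) (TenM C d (Id C A))"
    using interchange[of d "TenM C U U" "Id C A" U] by simp
  have j1: "Comp C (TenM C (Id C A) d') (TenM C U U) = TenM C U (Comp C (TenM C U U) d)"
    using interchange[of U "Id C A" U d'] d'U by simp
  have j2: "TenM C U (Comp C (TenM C U U) d) = Comp C (TenM C U (TenM C U U)) (TenM C (Id C A) d)"
    using interchange[of "Id C A" U d "TenM C U U"] by simp
  have "Comp C (TenM C d' (Id C A)) d' = Comp C (TenM C d' (Id C A)) (Comp C (TenM C U U) (Comp C d (Dag C U)))"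
    by (simp add: d'_def)
  also have "\<dots> = Comp C (Comp C (TenM C d' (Id C A)) (TenM C U U)) (Comp C d (Dag C U))"
    by (rule assoc) simp_all
  also have "\<dots> = Comp C (TenM C U (TenM C U U)) (Comp C (Comp C (TenM C d (Id C A)) d) (Dag C U))"
    unfolding i1 i2 by (simp add: assoc)
  also have "\<dots> = Comp C (TenM C U (TenM C U U)) (Comp C (Comp C (TenM C (Id C A) d) d) (Dag C U))"
    by (simp add: coassoc)
  also have "\<dots> = Comp C (Comp C (TenM C (Id C A) d') (TenM C U U)) (Comp C d (Dag C U))"
    unfolding j1 j2 by (simp add: assoc)
  also have "\<dots> = Comp C (TenM C (Id C A) d') (Comp C (TenM C U U) (Comp C d (Dag C U)))"
    by (rule assoc[symmetric]) simp_all
  also have "\<dots> = Comp C (TenM C (Id C A) d') d'"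
    by (simp add: d'_def)
  finally show ?thesis .
qed

lemma cul': "Comp C (TenM C g' (Id C A)) d' = Id C A"
proof -
  have i1: "Comp C (TenM C g' (Id C A)) (TenM C U U) = TenM C g U"
    using interchange[of U g' U "Id C A"] by (simp add: g'_def)
  have i2: "TenM C g U = Comp C U (TenM C g (Id C A))"
    using interchange[of g "Id C (Unit C)" "Id C A" U] by simp
  have "Comp C (TenM C g' (Id C A)) d' = Comp C (Comp C (TenM C g' (Id C A)) (TenM C U U)) (Comp C d (Dag C U))"
    unfolding d'_def by (rule assoc) simp_all
  also have "\<dots> = Comp C U (Comp C (Comp C (TenM C g (Id C A)) d) (Dag C U))"
    unfolding i1 i2 by (simp add: assoc)
  also have "\<dots> = Id C A" by (simp add: cul)
  finally show ?thesis .
qed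

lemma cur': "Comp C (TenM C (Id C A) g') d' = Id C A"
proof -
  have i1: "Comp C (TenM C (Id C A) g') (TenM C U U) = TenM C U g"
    using interchange[of U "Id C A" U g'] by (simp add: g'_def)
  have i2: "TenM C U g = Comp C U (TenM C (Id C A) g)"
    using interchange[of "Id C A" U g "Id C (Unit C)"] by simp
  have "Comp C (TenM C (Id C A) g') d' = Comp C (Comp C (TenM C (Id C A) g') (TenM C U U)) (Comp C d (Dag C U))"
    unfolding d'_def by (rule assoc) simp_all
  also have "\<dots> = Comp C U (Comp C (Comp C (TenM C (Id C A) g) d) (Dag C U))"
    unfolding i1 i2 by (simp add: assoc)
  also have "\<dots> = Id C A" by (simp add: cur)
  finally show ?thesis .
qed

lemma cocom': "Comp C (Sym C A A) d' = d'"
proof -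
  have n: "Comp C (Sym C A A) (TenM C U U) = Comp C (TenM C U U) (Sym C A A)"
    using sym_nat[of U U] by simp
  have "Comp C (Sym C A A) d' = Comp C (Comp C (Sym C A A) (TenM C U U)) (Comp C d (Dag C U))"
    unfolding d'_def by (rule assoc) simp_all
  also have "\<dots> = Comp C (TenM C U U) (Comp C (Comp C (Sym C A A) d) (Dag C U))"
    unfolding n by (simp add: assoc)
  also have "\<dots> = d'" by (simp add: cocom d'_def)
  finally show ?thesis .
qed

lemma iso': "Comp C (Dag C d') d' = Id C A"
proof -
  have i: "Comp C (TenM C (Dag C U) (Dag C U)) (TenM C U U) = TenM C (Id C A) (Id C A)"
    by (simp add: interchange)
  have "Comp C (Dag C d') d' = Comp C (Comp C U (Dag C d)) (Comp C (Comp C (TenM C (Dag C U) (Dag C U)) (TenM C U U)) (Comp C d (Dag C U)))"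
    unfolding d'_def by (simp add: assoc)
  also have "\<dots> = Id C A" unfolding i using assoc[of d "Dag C d" U, symmetric] by (simp add: assoc iso)
  finally show ?thesis .
qed


lemma frob': "Comp C d' (Dag C d') = Comp C (TenM C (Dag C d') (Id C A)) (TenM C (Id C A) d')"
proof -
  let ?I = "Id C A" and ?V = "Dag C U" and ?D = "Dag C d"
  have Dd': "Dag C d' = Comp C U (Comp C ?D (TenM C ?V ?V))"
    by (simp add: d'_def assoc)
  have p1: "TenM C (Dag C d') ?I = Comp C (TenM C U ?I) (Comp C (TenM C ?D ?I) (TenM C ?V (TenM C ?V ?I)))"
    unfolding Dd' using interchange[of "Comp C ?D (TenM C ?V ?V)" U ?I ?I]
      interchange[of "TenM C ?V ?V" ?D ?I ?I] by simp
  have p2: "TenM C ?I d' = Comp C (TenM C ?I (TenM C U U)) (Comp C (TenM C ?I d) (TenM C ?I ?V))"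
    unfolding d'_def using interchange[of ?I ?I "Comp C d ?V" "TenM C U U"]
      interchange[of ?I ?I ?V d] by simp
  have m1: "\<And>x. x \<in> Arr C \<Longrightarrow> Dom C x = TenO C A (TenO C A A) \<Longrightarrow>
     Comp C (Comp C x (TenM C ?V (TenM C ?V ?I))) (TenM C ?I (TenM C U U))
     = Comp C (Comp C x (TenM C ?I (TenM C ?I U))) (TenM C ?V (TenM C ?I ?I))"
  proof -
    fix x assume x: "x \<in> Arr C" "Dom C x = TenO C A (TenO C A A)"
    have "Comp C (TenM C ?V (TenM C ?V ?I)) (TenM C ?I (TenM C U U)) = Comp C (TenM C ?I (TenM C ?I U)) (TenM C ?V (TenM C ?I ?I))"
      by (simp add: interchange)
    then show "?thesis x" using x by (simp flip: assoc)
  qed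
  have m2: "\<And>x. x \<in> Arr C \<Longrightarrow> Dom C x = TenO C A A \<Longrightarrow>
     Comp C (Comp C x (TenM C ?D ?I)) (TenM C ?I (TenM C ?I U))
     = Comp C (Comp C x (TenM C ?I U)) (TenM C ?D ?I)"
  proof -
    fix x assume x: "x \<in> Arr C" "Dom C x = TenO C A A"
    have "Comp C (TenM C ?D ?I) (TenM C ?I (TenM C ?I U)) = Comp C (TenM C ?I U) (TenM C ?D ?I)"
      using interchange[of "TenM C ?I ?I" ?D U ?I] interchange[of ?D ?I ?I U] by simp
    then show "?thesis x" using x by (simp flip: assoc)
  qed
  have m3: "\<And>x. x \<in> Arr C \<Longrightarrow> Dom C x = TenO C A (TenO C A A) \<Longrightarrow>
     Comp C (Comp C x (TenM C ?V (TenM C ?I ?I))) (TenM C ?I d)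
     = Comp C (Comp C x (TenM C ?I d)) (TenM C ?V ?I)"
  proof -
    fix x assume x: "x \<in> Arr C" "Dom C x = TenO C A (TenO C A A)"
    have "Comp C (TenM C ?V (TenM C ?I ?I)) (TenM C ?I d) = Comp C (TenM C ?I d) (TenM C ?V ?I)"
      using interchange[of ?I ?V d "TenM C ?I ?I"] interchange[of ?V ?I ?I d] by simp
    then show "?thesis x" using x by (simp flip: assoc)
  qed
  have m4: "\<And>x. x \<in> Arr C \<Longrightarrow> Dom C x = TenO C A A \<Longrightarrow>
     Comp C (Comp C x (TenM C ?V ?I)) (TenM C ?I ?V) = Comp C x (TenM C ?V ?V)"
  proof -
    fix x assume x: "x \<in> Arr C" "Dom C x = TenO C A A"
    have "Comp C (TenM C ?V ?I) (TenM C ?I ?V) = TenM C ?V ?V"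
      by (simp add: interchange)
    then show "?thesis x" using x by (simp flip: assoc)
  qed
  have "Comp C (TenM C (Dag C d') (Id C A)) (TenM C (Id C A) d') =
     Comp C (Comp C (Comp C (TenM C U U) (TenM C ?D ?I)) (TenM C ?I d)) (TenM C ?V ?V)"
    unfolding p1 p2 using interchange[of ?I U U ?I] by (simp add: assoc m1 m2 m3 m4)
  also have "\<dots> = Comp C (Comp C (TenM C U U) (Comp C d ?D)) (TenM C ?V ?V)"
    by (simp add: frobl assoc)
  also have "\<dots> = Comp C d' (Dag C d')"
    unfolding Dd' d'_def using assoc[of ?D ?V d, symmetric] by (simp add: assoc)
  finally show ?thesis by simp
qed

lemma part1: "dagger_frobenius C A d' g'"
  unfolding dagger_frobenius_def hom_def
  using coassoc' cul' cur' cocom' iso' frob' by simp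

end

theorem mainTheorem1:
  fixes C :: "('o, 'm) dsmc" and A :: 'o and d g U :: 'm
  assumes "dagger_smc C"
    and "dagger_frobenius C A d g"
    and "unitary C A A U"
  shows "dagger_frobenius C A
           (Comp C (TenM C U U) (Comp C d (Dag C U))) (Comp C g (Dag C U))
    \<and> (Comp C g (Dag C d)
         = Comp C (Comp C g (Dag C U)) (Dag C (Comp C (TenM C U U) (Comp C d (Dag C U))))
       \<longleftrightarrow> lower_star C A (Comp C g (Dag C d)) U = U)"
proof -
  interpret FRU C A d g U
    using assms by (unfold_locales) auto
  show ?thesis
    using part1 part2 eprime unfolding d'_def g'_def us_def e_def by simp
qed

end
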